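(* Let $1 < n \leq m$ and let $W \in \mathbb{R}^{m \times n}$ have rows $w_1,\dots,w_m \in \mathbb{R}^n$. The map $\mathbb{R}^n \to \mathbb{R}^m$, $x \mapsto \operatorname{ReLU}(Wx)$ (with $\operatorname{ReLU}(y)=\max(y,0)$ applied componentwise) is injective if and only if $W$ has a directed spanning set of $\mathbb{R}^n$ with respect to every $x \in \mathbb{R}^n$.
   Context: Directed spanning set (DSS): for a matrix $W$ with rows $w_i \in \mathbb{R}^n$, a subspace (or set) $\Omega \subset \mathbb{R}^n$ and a vector $x \in \mathbb{R}^n$, $W$ has a DSS of $\Omega$ with respect to $x$ if there is a collection of rows $w_i$ of $W$, each satisfying $\langle x, w_i\rangle \geq 0$, whose linear span contains $\Omega$. Equivalently, $W$ has a DSS of $\mathbb{R}^n$ w.r.t. $x$ iff the rows $\{w_i : \langle x,w_i\rangle \ge 0\}$ span $\mathbb{R}^n$. *)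

theory Defs
  imports "HOL-Analysis.Analysis"
begin

definition relu_vec :: "real ^ 'm \<Rightarrow> real ^ 'm" where
  "relu_vec y = (\<chi> i. max (y $ i) 0)"

definition has_DSS :: "real ^ 'n ^ 'm \<Rightarrow> (real ^ 'n) set \<Rightarrow> real ^ 'n \<Rightarrow> bool" where
  "has_DSS W \<Omega> x \<longleftrightarrow>
     (\<exists>I :: 'm set. (\<forall>i\<in>I. x \<bullet> (W $ i) \<ge> 0) \<and> \<Omega> \<subseteq> span ((\<lambda>i. W $ i) ` I))"

end

theory Submission
  imports Defs
begin

lemma DSS_iff:
  fixes W :: "real ^ 'n ^ 'm"
  shows "has_DSS W UNIV x \<longleftrightarrow> span ((\<lambda>i. W $ i) ` {i. x \<bullet> (W $ i) \<ge> 0}) = UNIV"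
proof
  assume "has_DSS W UNIV x"
  then obtain I where I: "\<forall>i\<in>I. x \<bullet> (W $ i) \<ge> 0" "UNIV \<subseteq> span ((\<lambda>i. W $ i) ` I)"
    unfolding has_DSS_def by blast
  have "span ((\<lambda>i. W $ i) ` I) \<subseteq> span ((\<lambda>i. W $ i) ` {i. x \<bullet> (W $ i) \<ge> 0})"
    by (rule span_mono) (use I in auto)
  then show "span ((\<lambda>i. W $ i) ` {i. x \<bullet> (W $ i) \<ge> 0}) = UNIV" using I by auto
next
  assume "span ((\<lambda>i. W $ i) ` {i. x \<bullet> (W $ i) \<ge> 0}) = UNIV"
  then show "has_DSS W UNIV x" unfolding has_DSS_def
    by (intro exI[of _ "{i. x \<bullet> (W $ i) \<ge> 0}"]) auto
qed

lemma relu_comp: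
  assumes "relu_vec a = relu_vec b"
  shows "max (a $ i) 0 = max (b $ i) 0"
proof -
  have "relu_vec a $ i = relu_vec b $ i" using assms by simp
  then show ?thesis by (simp add: relu_vec_def)
qed

theorem theorem1:
  fixes W :: "real ^ 'n ^ 'm"
  assumes "1 < CARD('n)" and "CARD('n) \<le> CARD('m)"
  shows "inj (\<lambda>x :: real ^ 'n. relu_vec (W *v x)) \<longleftrightarrow> (\<forall>x :: real ^ 'n. has_DSS W UNIV x)"
proof
  assume inj: "inj (\<lambda>x :: real ^ 'n. relu_vec (W *v x))"
  show "\<forall>x :: real ^ 'n. has_DSS W UNIV x"
  proof (rule ccontr)
    assume "\<not> (\<forall>x :: real ^ 'n. has_DSS W UNIV x)"
    then obtain x :: "real ^ 'n" where nx: "\<not> has_DSS W UNIV x" by blast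
    then have "span ((\<lambda>i. W $ i) ` {i. x \<bullet> (W $ i) \<ge> 0}) \<noteq> UNIV"
      using DSS_iff by blast
    then obtain a :: "real ^ 'n" where a: "a \<noteq> 0"
      "span ((\<lambda>i. W $ i) ` {i. x \<bullet> (W $ i) \<ge> 0}) \<subseteq> {z. a \<bullet> z = 0}"
      using span_not_univ_subset_hyperplane by blast
    have orth: "W $ i \<bullet> a = 0" if "x \<bullet> (W $ i) \<ge> 0" for i
    proof -
      have "W $ i \<in> span ((\<lambda>i. W $ i) ` {i. x \<bullet> (W $ i) \<ge> 0})"
        using that by (intro span_base) auto
      then show ?thesis using a(2) by (auto simp: inner_commute)
    qed
    have ev1: "\<forall>\<^sub>F t in at (0::real). x \<bullet> (W $ i) < 0 \<longrightarrow> W $ i \<bullet> (x + t *\<^sub>R a) < 0" for i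
    proof (cases "x \<bullet> (W $ i) < 0")
      case True
      have "((\<lambda>t. W $ i \<bullet> x + t * (W $ i \<bullet> a)) \<longlongrightarrow> W $ i \<bullet> x + 0 * (W $ i \<bullet> a)) (at (0::real))"
        by (intro tendsto_intros)
      then have "((\<lambda>t. W $ i \<bullet> x + t * (W $ i \<bullet> a)) \<longlongrightarrow> W $ i \<bullet> x) (at (0::real))" by simp
      moreover have "W $ i \<bullet> x < 0" using True by (simp add: inner_commute)
      ultimately have "\<forall>\<^sub>F t in at (0::real). W $ i \<bullet> x + t * (W $ i \<bullet> a) < 0"
        using order_tendstoD(2) by blast
      then show ?thesis by eventually_elim (simp add: inner_add_right)
    qed simp
    have "\<forall>\<^sub>F t in at (0::real). \<forall>i. x \<bullet> (W $ i) < 0 \<longrightarrow> W $ i \<bullet> (x + t *\<^sub>R a) < 0"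
      by (rule eventually_all_finite) (rule ev1)
    moreover have "\<forall>\<^sub>F t in at (0::real). t \<noteq> 0" by (simp add: eventually_at_filter)
    ultimately have "\<forall>\<^sub>F t in at (0::real). t \<noteq> 0 \<and> (\<forall>i. x \<bullet> (W $ i) < 0 \<longrightarrow> W $ i \<bullet> (x + t *\<^sub>R a) < 0)"
      by eventually_elim auto
    then obtain t :: real where t: "t \<noteq> 0" "\<forall>i. x \<bullet> (W $ i) < 0 \<longrightarrow> W $ i \<bullet> (x + t *\<^sub>R a) < 0"
      using eventually_happens[of _ "at (0::real)"] at_neq_bot by blast
    have "relu_vec (W *v x) = relu_vec (W *v (x + t *\<^sub>R a))"
      unfolding relu_vec_def
    proof (rule vec_eq_iff[THEN iffD2], rule allI)
      fix i
      show "(\<chi> i. max ((W *v x) $ i) 0) $ i = (\<chi> i. max ((W *v (x + t *\<^sub>R a)) $ i) 0) $ i"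
      proof (cases "x \<bullet> (W $ i) \<ge> 0")
        case True
        then show ?thesis using orth[OF True]
          by (simp add: matrix_vector_mul_component inner_add_right)
      next
        case False
        then have "W $ i \<bullet> (x + t *\<^sub>R a) < 0" "W $ i \<bullet> x < 0" using t(2)
          by (auto simp: inner_commute)
        then show ?thesis by (simp add: matrix_vector_mul_component)
      qed
    qed
    then have "x = x + t *\<^sub>R a" using inj by (auto dest: injD)
    then show False using t(1) a(1) by simp
  qed
next
  assume H: "\<forall>x :: real ^ 'n. has_DSS W UNIV x"
  show "inj (\<lambda>x :: real ^ 'n. relu_vec (W *v x))"
  proof (rule injI)
    fix x y :: "real ^ 'n"
    assume eq: "relu_vec (W *v x) = relu_vec (W *v y)"
    let ?S = "(\<lambda>i. W $ i) ` {i. (x + y) \<bullet> (W $ i) \<ge> 0}"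
    have sp: "span ?S = UNIV" using H DSS_iff by blast
    have gen: "orthogonal (x - y) z" if zS: "z \<in> ?S" for z
    proof -
      obtain i where i: "z = W $ i" "(x + y) \<bullet> (W $ i) \<ge> 0" using zS by auto
      have m: "max (W $ i \<bullet> x) 0 = max (W $ i \<bullet> y) 0"
        using relu_comp[OF eq, of i] by (simp add: matrix_vector_mul_component)
      have "W $ i \<bullet> x + W $ i \<bullet> y \<ge> 0" using i(2) by (simp add: inner_add_left inner_add_right inner_commute)
      then have "W $ i \<bullet> x = W $ i \<bullet> y" using m by (auto simp: max_def split: if_splits)
      then have "(x - y) \<bullet> W $ i = 0" by (metis inner_diff_left inner_commute diff_self)
      then show ?thesis using i(1) by (simp add: orthogonal_def)
    qed
    have "orthogonal (x - y) (x - y)"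
      by (rule orthogonal_to_span[of _ ?S]) (use sp gen in auto)
    then show "x = y" by (simp add: orthogonal_def)
  qed
qed

end
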